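(* In the SIS model under multi-layer Markovian mobility described in the context, with every generator matrix $Q^\alpha$ irreducible (every mobility digraph strongly connected), consider a solution with $\boldsymbol x(0)\gg\boldsymbol 0$ and $\boldsymbol p(0)\in[0,1]^{nm}$. If $p^\alpha_i(t)\to 0$ as $t\to\infty$ for some $i\in\{1,\dots,n\}$ and some $\alpha\in\{1,\dots,m\}$, then $\boldsymbol p(t)\to\boldsymbol 0$ as $t\to\infty$.
   Context: Setting: $n$ patches and $m$ classes. For each class $\alpha$, $Q^\alpha=(q^\alpha_{ij})$ is a continuous-time Markov chain generator on $\{1,\dots,n\}$ ($q^\alpha_{ij}\ge0$ for $i\ne j$ is the rate from $i$ to $j$, $q^\alpha_{ii}=-\sum_{j\ne i}q^\alpha_{ij}$). $x^\alpha_i>0$ is the number of class-$\alpha$ individuals at node $i$, $p^\alpha_i$ the infected fraction of class $\alpha$ at node $i$; $\boldsymbol x,\boldsymbol p\in\mathbb R^{nm}$ stack these class by class, and $P=\operatorname{diag}(\boldsymbol p)$. Node $i$ has infection rate $\beta_i>0$ and recovery rate $\delta_i\ge0$; $B$ and $D$ are $nm\times nm$ block-diagonal with $m$ identical blocks $\operatorname{diag}(\beta_1,\dots,\beta_n)$ and $\operatorname{diag}(\delta_1,\dots,\delta_n)$. $L(\boldsymbol x)$ is block-diagonal with blocks $L^\alpha(\boldsymbol x)$: $l^\alpha_{ii}=\sum_{j\ne i}q^\alpha_{ji}x^\alpha_j/x^\alpha_i$, $l^\alpha_{ij}=-q^\alpha_{ji}x^\alpha_j/x^\alpha_i$ ($i\ne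 j$). With $f^\alpha_i(\boldsymbol x)=x^\alpha_i/\sum_\gamma x^\gamma_i$, $F^\alpha=\operatorname{diag}(f^\alpha_1,\dots,f^\alpha_n)$, $\bar F=[F^1,\dots,F^m]$, $F(\boldsymbol x)$ is $m$ copies of $\bar F(\boldsymbol x)$ stacked vertically. Dynamics: $\dot{\boldsymbol p}=(BF(\boldsymbol x)-D-L(\boldsymbol x))\boldsymbol p-PBF(\boldsymbol x)\boldsymbol p$, $\dot{\boldsymbol x}^\alpha=(Q^\alpha)^\top\boldsymbol x^\alpha$. Componentwise, $\dot p^\alpha_i=-\delta_ip^\alpha_i+\beta_i\bar p_i(1-p^\alpha_i)-l^\alpha_{ii}p^\alpha_i-\sum_{j\ne i}l^\alpha_{ij}p^\alpha_j$ with $\bar p_i=\sum_\alpha f^\alpha_ip^\alpha_i$. *)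

theory Defs
  imports "HOL-Analysis.Analysis"
begin

text \<open>Nodes are indexed by a finite type 'n, classes by a finite type 'c.
  q a i j is the rate q^a_{ij} of the generator Q^a; x a i, p a i are x^a_i, p^a_i.\<close>

definition is_generator :: "('n::finite \<Rightarrow> 'n \<Rightarrow> real) \<Rightarrow> bool" where
  "is_generator Q \<longleftrightarrow> (\<forall>i j. i \<noteq> j \<longrightarrow> 0 \<le> Q i j) \<and>
     (\<forall>i. Q i i = - (\<Sum>j\<in>UNIV - {i}. Q i j))"

definition irreducible_generator :: "('n::finite \<Rightarrow> 'n \<Rightarrow> real) \<Rightarrow> bool" where
  "irreducible_generator Q \<longleftrightarrow> (\<forall>i j. (i, j) \<in> {(u, v). u \<noteq> v \<and> 0 < Q u v}\<^sup>*)"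

definition Lmat :: "('c \<Rightarrow> 'n::finite \<Rightarrow> 'n \<Rightarrow> real) \<Rightarrow> ('c \<Rightarrow> 'n \<Rightarrow> real) \<Rightarrow> 'c \<Rightarrow> 'n \<Rightarrow> 'n \<Rightarrow> real" where
  "Lmat q x a i j = (if i = j then (\<Sum>k\<in>UNIV - {i}. q a k i * x a k) / x a i
                     else - q a j i * x a j / x a i)"

definition frac :: "('c::finite \<Rightarrow> 'n \<Rightarrow> real) \<Rightarrow> 'c \<Rightarrow> 'n \<Rightarrow> real" where
  "frac x a i = x a i / (\<Sum>g\<in>UNIV. x g i)"

definition pbar :: "('c::finite \<Rightarrow> 'n \<Rightarrow> real) \<Rightarrow> ('c \<Rightarrow> 'n \<Rightarrow> real) \<Rightarrow> 'n \<Rightarrow> real" where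
  "pbar x p i = (\<Sum>a\<in>UNIV. frac x a i * p a i)"

definition p_rhs :: "('c::finite \<Rightarrow> 'n::finite \<Rightarrow> 'n \<Rightarrow> real) \<Rightarrow> ('n \<Rightarrow> real) \<Rightarrow> ('n \<Rightarrow> real)
     \<Rightarrow> ('c \<Rightarrow> 'n \<Rightarrow> real) \<Rightarrow> ('c \<Rightarrow> 'n \<Rightarrow> real) \<Rightarrow> 'c \<Rightarrow> 'n \<Rightarrow> real" where
  "p_rhs q \<beta> \<delta> x p a i =
     - \<delta> i * p a i + \<beta> i * pbar x p i * (1 - p a i) - Lmat q x a i i * p a i
     - (\<Sum>j\<in>UNIV - {i}. Lmat q x a i j * p a j)"

definition x_rhs :: "('c \<Rightarrow> 'n::finite \<Rightarrow> 'n \<Rightarrow> real) \<Rightarrow> ('c \<Rightarrow> 'n \<Rightarrow> real) \<Rightarrow> 'c \<Rightarrow> 'n \<Rightarrow> real" where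
  "x_rhs q x a i = (\<Sum>j\<in>UNIV. q a j i * x a j)"

end

theory Submission
  imports Defs
begin


lemma w2a:
  assumes "\<And>t. 0 \<le> t \<Longrightarrow> (f has_real_derivative f' t) (at t within {0..})" "0 < t"
  shows "(f has_real_derivative f' t) (at t)"
proof -
  have "at t within {0..} = at t" by (rule at_within_interior) (use assms(2) in simp)
  thus ?thesis using assms(1)[of t] assms(2) by simp
qed

lemma w2c:
  assumes "\<And>t. 0 \<le> t \<Longrightarrow> (f has_real_derivative f' t) (at t within {0..})"
  shows "continuous_on {0..} f"
  by (rule DERIV_continuous_on[where D=f']) (use assms in auto)

lemma decay:
  fixes f f' :: "real \<Rightarrow> real"
  assumes c: "continuous_on {0..} f" and d: "\<And>s. 0 < s \<Longrightarrow> (f has_real_derivative f' s) (at s)"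
    and ineq: "\<And>s. 0 < s \<Longrightarrow> f' s \<ge> -M * f s" and t: "0 \<le> t" "t \<le> s"
  shows "f s \<ge> exp (-M*(s-t)) * f t"
proof -
  let ?g = "\<lambda>r. exp (M*r) * f r"
  have "?g t \<le> ?g s"
  proof (rule DERIV_nonneg_imp_increasing_open[OF t(2)])
    fix r assume r: "t < r" "r < s"
    have "(?g has_real_derivative (exp (M*r) * M * f r + exp (M*r) * f' r)) (at r)"
      using d[of r] r t by (auto intro!: derivative_eq_intros)
    moreover have "exp (M*r) * M * f r + exp (M*r) * f' r \<ge> 0"
    proof -
      have "exp (M*r) * M * f r + exp (M*r) * f' r = exp (M*r) * (f' r + M * f r)" by (simp add: algebra_simps)
      moreover have "f' r + M * f r \<ge> 0" using ineq[of r] r t by simp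
      ultimately show ?thesis by simp
    qed
    ultimately show "\<exists>y. (?g has_real_derivative y) (at r) \<and> 0 \<le> y" by blast
  next
    show "continuous_on {t..s} ?g"
    proof -
      have "continuous_on {t..s} f" by (rule continuous_on_subset[OF c]) (use t in auto)
      thus ?thesis by (intro continuous_on_mult continuous_on_exp continuous_on_mult continuous_on_const continuous_on_id)
    qed
  qed
  hence h: "exp (-M * s) * (exp (M*t) * f t) \<le> exp (-M * s) * (exp (M * s) * f s)"
    by (simp add: mult_left_mono)
  have e1: "exp (-M * s) * (exp (M*t) * f t) = exp (-M*(s-t)) * f t"
    by (simp add: mult.assoc[symmetric] exp_add[symmetric] right_diff_distrib)
  have e2: "exp (-M * s) * (exp (M * s) * f s) = f s"
    by (simp add: mult.assoc[symmetric] exp_add[symmetric])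
  show ?thesis using h unfolding e1 e2 .
qed

lemma finite_uniform_pos:
  fixes P :: "'k::finite \<Rightarrow> real \<Rightarrow> bool"
  assumes "\<And>k. \<exists>c>0. P k c" "\<And>k c c'. P k c \<Longrightarrow> 0 < c' \<Longrightarrow> c' \<le> c \<Longrightarrow> P k c'"
  shows "\<exists>c>0. \<forall>k. P k c"
proof -
  obtain f where f: "\<And>k. f k > 0 \<and> P k (f k)" using assms(1) by metis
  define c where "c = Min (range f)"
  have "c \<in> range f" unfolding c_def by (intro Min_in) auto
  hence "c > 0" using f by auto
  moreover have "\<And>k. c \<le> f k" unfolding c_def by (intro Min_le) auto
  ultimately show ?thesis using f assms(2) by blast
qed

lemma finite_uniform_nat:
  fixes P :: "'k::finite \<Rightarrow> nat \<Rightarrow> bool"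
  assumes "\<And>k. \<exists>m0. \<forall>m\<ge>m0. P k m"
  shows "\<exists>M. \<forall>k. P k M"
proof -
  obtain f where f: "\<And>k m. m \<ge> f k \<Longrightarrow> P k m" using assms by metis
  define M where "M = Max (range f)"
  have "\<And>k. f k \<le> M" unfolding M_def by (intro Max_ge) auto
  thus ?thesis using f by blast
qed




lemma nonneg_inv:
  fixes u u' :: "real \<Rightarrow> 'k::finite \<Rightarrow> real"
  assumes deriv: "\<And>t k. 0 \<le> t \<Longrightarrow> ((\<lambda>s. u s k) has_real_derivative u' t k) (at t within {0..})"
    and init: "\<And>k. 0 \<le> u 0 k" and K: "0 \<le> K"
    and cond: "\<And>t k. 0 < t \<Longrightarrow> -1 \<le> u t k \<Longrightarrow> u t k \<le> 0 \<Longrightarrow> (\<forall>j. u t k \<le> u t j) \<Longrightarrow> K * u t k \<le> u' t k"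
    and t: "0 \<le> t"
  shows "0 \<le> u t k"
proof (rule ccontr)
  assume "\<not> 0 \<le> u t k"
  hence neg: "u t k < 0" by simp
  define C where "C = K + 1"
  define \<epsilon> where "\<epsilon> = exp (-C*t) * min (- u t k) 1 / 2"
  have epos: "\<epsilon> > 0" unfolding \<epsilon>_def using neg by simp
  have eb: "\<epsilon> * exp (C*t) = min (-u t k) 1 / 2"
    unfolding \<epsilon>_def by (simp add: exp_minus field_simps)
  define v where "v s j = u s j + \<epsilon> * exp (C * s)" for s j
  have vderiv: "((\<lambda>s. v s j) has_real_derivative (u' s j + \<epsilon> * (C * exp (C * s)))) (at s)" if "0 < s" for s j
    unfolding v_def using w2a[OF deriv that] by (auto intro!: derivative_eq_intros)
  have vcont: "continuous_on {0..} (\<lambda>s. v s j)" for j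
    unfolding v_def using w2c[OF deriv] by (intro continuous_intros) auto
  define S where "S = {s \<in> {0..t}. \<exists>j. v s j \<le> 0}"
  have tS: "t \<in> S" unfolding S_def v_def using t eb neg by (auto intro!: exI[of _ k])
  have Seq: "S = \<Union>(range (\<lambda>j. {0..t} \<inter> (\<lambda>s. v s j) -` {..0}))" unfolding S_def by auto
  have clj: "closed ({0..t} \<inter> (\<lambda>s. v s j) -` {..0})" for j
    by (rule continuous_closed_preimage) (auto intro: continuous_on_subset[OF vcont])
  have clS: "closed S" unfolding Seq by (rule closed_UN) (auto intro: clj)
  have bdd: "bdd_below S" unfolding S_def by (auto intro: bdd_belowI[of _ 0])
  define ts where "ts = Inf S"
  have tsS: "ts \<in> S" unfolding ts_def using tS bdd clS closed_contains_Inf by blast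
  hence ts0: "0 \<le> ts" "ts \<le> t" unfolding S_def by auto
  have below: "v s j > 0" if "0 \<le> s" "s < ts" for s j
  proof (rule ccontr)
    assume "\<not> v s j > 0"
    hence "s \<in> S" unfolding S_def using that ts0 by (auto simp: not_less)
    hence "ts \<le> s" unfolding ts_def using bdd by (rule cInf_lower)
    thus False using that by simp
  qed
  have tspos: "ts > 0"
  proof (rule ccontr)
    assume "\<not> ts > 0" hence "ts = 0" using ts0 by simp
    then obtain j where "v 0 j \<le> 0" using tsS unfolding S_def by auto
    moreover have "v 0 j > 0" unfolding v_def using init[of j] epos by simp
    ultimately show False by simp
  qed
  obtain j where jdef: "v ts j = Min (range (v ts))"
  proof -
    have "Min (range (v ts)) \<in> range (v ts)" by (rule Min_in) auto
    thus ?thesis using that by (metis imageE)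
  qed
  have jmin: "v ts j \<le> v ts i" for i unfolding jdef by (rule Min_le) auto
  obtain k' where "v ts k' \<le> 0" using tsS unfolding S_def by auto
  hence vle: "v ts j \<le> 0" using jmin[of k'] by simp
  have vge: "v ts j \<ge> 0"
  proof (rule ccontr)
    assume "\<not> v ts j \<ge> 0" hence vn: "v ts j < 0" by simp
    have "isCont (\<lambda>s. v s j) ts" using vderiv[OF tspos] by (rule DERIV_isCont)
    then obtain d where d: "d > 0" "\<And>y. dist y ts < d \<Longrightarrow> dist (v y j) (v ts j) < - v ts j"
      using vn unfolding continuous_at_eps_delta by (metis neg_0_less_iff_less)
    define s where "s = max (ts/2) (ts - d/2)"
    have "dist s ts < d" unfolding s_def dist_real_def using d tspos by auto
    hence "v s j < 0" using d(2)[of s] unfolding dist_real_def by auto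
    moreover have "v s j > 0" by (rule below) (use tspos d in \<open>auto simp: s_def\<close>)
    ultimately show False by simp
  qed
  have v0: "v ts j = 0" using vle vge by simp
  have ets: "\<epsilon> * exp (C*ts) \<le> 1/2"
  proof -
    have "\<epsilon> * exp (C*ts) \<le> \<epsilon> * exp (C*t)" using ts0 epos unfolding C_def using K
      by (intro mult_left_mono) (auto intro: mult_left_mono)
    thus ?thesis using eb by simp
  qed
  have uj: "u ts j = - (\<epsilon> * exp (C*ts))" using v0 unfolding v_def by simp
  have c1: "-1 \<le> u ts j" "u ts j \<le> 0" using uj ets epos by auto
  have c2: "\<forall>i. u ts j \<le> u ts i" using jmin unfolding v_def by auto
  have cK: "K * u ts j \<le> u' ts j" using cond[OF tspos c1 c2] .
  have "u' ts j + \<epsilon> * (C * exp (C*ts)) \<ge> \<epsilon> * exp (C*ts)"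
    using cK uj unfolding C_def by (simp add: algebra_simps)
  hence dpos: "u' ts j + \<epsilon> * (C * exp (C*ts)) > 0" using epos by (smt (verit) exp_gt_zero mult_pos_pos)
  obtain d where d: "d > 0" "\<And>h. h > 0 \<Longrightarrow> h < d \<Longrightarrow> v (ts - h) j < v ts j"
    using DERIV_pos_inc_left[OF vderiv[OF tspos] dpos] by blast
  define h where "h = min (d/2) (ts/2)"
  have "v (ts - h) j < 0" using d(2)[of h] d(1) tspos v0 unfolding h_def by auto
  moreover have "v (ts - h) j > 0" by (rule below) (use tspos d in \<open>auto simp: h_def\<close>)
  ultimately show False by simp
qed




lemma propagate:
  fixes y y' w :: "real \<Rightarrow> real"
  assumes dy: "\<And>t. 0 < t \<Longrightarrow> (y has_real_derivative y' t) (at t)"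
    and ylim: "(y \<longlongrightarrow> 0) at_top"
    and wnn: "\<And>t. T \<le> t \<Longrightarrow> 0 \<le> w t"
    and ineq: "\<And>t. T \<le> t \<Longrightarrow> y' t \<ge> -K * \<bar>y t\<bar> + c * w t"
    and dec: "\<And>t s. T \<le> t \<Longrightarrow> t \<le> s \<Longrightarrow> s \<le> t+1 \<Longrightarrow> w s \<ge> d * w t"
    and pos: "0 < c" "0 < d" "0 \<le> K"
  shows "(w \<longlongrightarrow> 0) at_top"
proof (rule order_tendstoI)
  fix a :: real assume "a < 0"
  thus "eventually (\<lambda>t. a < w t) at_top"
    using wnn by (auto simp: eventually_at_top_linorder intro!: exI[of _ T] less_le_trans[of a 0])
next
  fix \<eta> :: real assume eta: "0 < \<eta>"
  define \<epsilon> where "\<epsilon> = c*d*\<eta>/(4*(K+1))"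
  have epos: "\<epsilon> > 0" unfolding \<epsilon>_def using pos eta by simp
  have e1: "K * \<epsilon> \<le> c*d*\<eta>/4" and e2: "2 * \<epsilon> \<le> c*d*\<eta>/2"
  proof -
    have cdp: "c*d*\<eta> > 0" using pos eta by simp
    have eq: "\<epsilon> * (4*(K+1)) = c*d*\<eta>" unfolding \<epsilon>_def using pos by simp
    show "K * \<epsilon> \<le> c*d*\<eta>/4" using eq epos pos by (simp add: algebra_simps)
    have "K*\<epsilon> \<ge> 0" using pos epos by simp
    thus "2 * \<epsilon> \<le> c*d*\<eta>/2" using eq by (simp add: algebra_simps)
  qed
  have "eventually (\<lambda>t. y t < \<epsilon>) at_top" "eventually (\<lambda>t. -\<epsilon> < y t) at_top"
    using order_tendstoD(1)[OF ylim, of "-\<epsilon>"] order_tendstoD(2)[OF ylim, of "\<epsilon>"] epos by auto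
  hence "eventually (\<lambda>t. \<bar>y t\<bar> < \<epsilon>) at_top" by eventually_elim auto
  then obtain T1 where T1: "\<And>t. T1 \<le> t \<Longrightarrow> \<bar>y t\<bar> < \<epsilon>" by (auto simp: eventually_at_top_linorder)
  show "eventually (\<lambda>t. w t < \<eta>) at_top"
    unfolding eventually_at_top_linorder
  proof (intro exI[of _ "max (max T T1) 1"] allI impI)
    fix t assume t: "max (max T T1) 1 \<le> t"
    show "w t < \<eta>"
    proof (rule ccontr)
      assume "\<not> w t < \<eta>" hence wt: "w t \<ge> \<eta>" by simp
      let ?\<phi> = "\<lambda>s. y s - (c*d*\<eta>/2) * s"
      have "?\<phi> t \<le> ?\<phi> (t+1)"
      proof (rule DERIV_nonneg_imp_increasing_open[of t "t+1" ?\<phi>])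
        fix s assume s: "t < s" "s < t + 1"
        have "(?\<phi> has_real_derivative (y' s - c*d*\<eta>/2)) (at s)"
          using dy[of s] s t by (auto intro!: derivative_eq_intros)
        moreover have "y' s - c*d*\<eta>/2 \<ge> 0"
        proof -
          have "w s \<ge> d * w t" using dec[of t s] s t by auto
          moreover have "d * w t \<ge> d * \<eta>" using wt pos by simp
          ultimately have ws: "c * w s \<ge> c*d*\<eta>" using pos by (smt (verit) mult_left_mono mult.assoc)
          have "K * \<bar>y s\<bar> \<le> K * \<epsilon>" using T1[of s] s t pos by (intro mult_left_mono) auto
          moreover have "y' s \<ge> -(K * \<bar>y s\<bar>) + c * w s" using ineq[of s] s t by simp
          moreover have "c*d*\<eta> > 0" using pos eta by simp
          ultimately show ?thesis using ws e1 by linarith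
        qed
        ultimately show "\<exists>z. (?\<phi> has_real_derivative z) (at s) \<and> 0 \<le> z" by blast
      next
        have "\<forall>s\<in>{t..t+1}. isCont ?\<phi> s"
        proof
          fix s assume "s \<in> {t..t+1}"
          hence "isCont y s" using t by (intro DERIV_isCont[OF dy]) auto
          thus "isCont ?\<phi> s" by (intro continuous_intros)
        qed
        thus "continuous_on {t..t+1} ?\<phi>" by (rule continuous_at_imp_continuous_on)
      qed simp
      hence "y (t+1) \<ge> y t + c*d*\<eta>/2" by (simp add: algebra_simps add_divide_distrib)
      moreover have "\<bar>y t\<bar> < \<epsilon>" "\<bar>y (t+1)\<bar> < \<epsilon>" using T1[of t] T1[of "t+1"] t by auto
      ultimately show False using e2 by linarith
    qed
  qed
qed




locale sis =
  fixes q :: "'c::finite \<Rightarrow> 'n::finite \<Rightarrow> 'n \<Rightarrow> real"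
    and \<beta> \<delta> :: "'n \<Rightarrow> real"
    and x p :: "real \<Rightarrow> 'c \<Rightarrow> 'n \<Rightarrow> real"
  assumes gen: "\<And>a. is_generator (q a)"
    and irr: "\<And>a. irreducible_generator (q a)"
    and beta_pos: "\<And>i. 0 < \<beta> i"
    and delta_nonneg: "\<And>i. 0 \<le> \<delta> i"
    and x_deriv: "\<And>t a i. 0 \<le> t \<Longrightarrow>
        ((\<lambda>s. x s a i) has_real_derivative x_rhs q (x t) a i) (at t within {0..})"
    and p_deriv: "\<And>t a i. 0 \<le> t \<Longrightarrow>
        ((\<lambda>s. p s a i) has_real_derivative p_rhs q \<beta> \<delta> (x t) (p t) a i) (at t within {0..})"
    and x0: "\<And>a i. 0 < x 0 a i"
    and p0: "\<And>a i. 0 \<le> p 0 a i \<and> p 0 a i \<le> 1"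
begin

lemma qoff: "i \<noteq> j \<Longrightarrow> 0 \<le> q a i j"
  using gen[of a] unfolding is_generator_def by auto

lemma qrow: "(\<Sum>j\<in>UNIV. q a i j) = 0"
proof -
  have "(\<Sum>j\<in>UNIV. q a i j) = q a i i + (\<Sum>j\<in>UNIV - {i}. q a i j)"
    by (simp add: sum.remove)
  thus ?thesis using gen[of a] unfolding is_generator_def by simp
qed

definition "Qs = (\<Sum>a\<in>UNIV. \<Sum>i\<in>UNIV. \<Sum>j\<in>UNIV. \<bar>q a i j\<bar>)"

lemma qabs: "\<bar>q a i j\<bar> \<le> Qs"
proof -
  have "\<bar>q a i j\<bar> \<le> (\<Sum>j\<in>UNIV. \<bar>q a i j\<bar>)" by (rule member_le_sum) auto
  also have "\<dots> \<le> (\<Sum>i\<in>UNIV. \<Sum>j\<in>UNIV. \<bar>q a i j\<bar>)" by (rule member_le_sum) (auto intro: sum_nonneg)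
  also have "\<dots> \<le> Qs" unfolding Qs_def by (rule member_le_sum) (auto intro: sum_nonneg)
  finally show ?thesis .
qed

lemma Qs_nonneg: "0 \<le> Qs" using qabs[of undefined undefined undefined] by simp

lemma x_rhs_split: "x_rhs q X a i = q a i i * X a i + (\<Sum>j\<in>UNIV-{i}. q a j i * X a j)"
  unfolding x_rhs_def by (simp add: sum.remove)

lemma x_nonneg: "0 \<le> t \<Longrightarrow> 0 \<le> x t a i"
proof -
  assume t: "0 \<le> t"
  let ?u = "\<lambda>t (k::'c\<times>'n). x t (fst k) (snd k)"
  let ?u' = "\<lambda>t (k::'c\<times>'n). x_rhs q (x t) (fst k) (snd k)"
  have "0 \<le> ?u t (a,i)"
  proof (rule nonneg_inv[where u = ?u and u' = ?u' and t = t and k = "(a,i)" and K = "CARD('n) * Qs"])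
    show "\<And>t k. 0 \<le> t \<Longrightarrow> ((\<lambda>s. ?u s k) has_real_derivative ?u' t k) (at t within {0..})"
      using x_deriv by auto
    show "\<And>k. 0 \<le> ?u 0 k" using x0 by (simp add: less_imp_le)
    show "0 \<le> real CARD('n) * Qs" using Qs_nonneg by simp
    show "0 \<le> t" by fact
  next
    fix t k assume h: "0 < t" "-1 \<le> ?u t k" "?u t k \<le> 0" "\<forall>j. ?u t k \<le> ?u t j"
    obtain b l where k: "k = (b,l)" by force
    have le: "x t b l \<le> x t b j" for j using h(4)[rule_format, of "(b,j)"] k by simp
    have "x_rhs q (x t) b l = (\<Sum>j\<in>UNIV. q b j l * x t b j)" unfolding x_rhs_def ..
    also have "\<dots> \<ge> (\<Sum>j\<in>UNIV. q b j l * x t b l)"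
    proof (rule sum_mono)
      fix j show "q b j l * x t b l \<le> q b j l * x t b j"
        by (cases "j = l") (auto intro: mult_left_mono le qoff)
    qed
    hence "x_rhs q (x t) b l \<ge> (\<Sum>j\<in>UNIV. q b j l) * x t b l"
      unfolding x_rhs_def by (simp add: sum_distrib_right)
    moreover have "(\<Sum>j\<in>UNIV. q b j l) \<le> CARD('n) * Qs"
      using sum_bounded_above[of UNIV "\<lambda>j. q b j l" Qs] qabs by (metis abs_le_D1 card_UNIV)
    moreover have "x t b l \<le> 0" using h(3) k by simp
    ultimately have "CARD('n) * Qs * x t b l \<le> x_rhs q (x t) b l"
      by (meson mult_right_mono_neg order_trans)
    thus "CARD('n) * Qs * ?u t k \<le> ?u' t k" using k by simp
  qed
  thus ?thesis by simp
qed

lemma x_lower_decay: "0 \<le> t \<Longrightarrow> t \<le> s \<Longrightarrow> x s a i \<ge> exp (-Qs*(s-t)) * x t a i"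
proof (rule decay[where f' = "\<lambda>s. x_rhs q (x s) a i"])
  show "continuous_on {0..} (\<lambda>s. x s a i)" by (rule w2c[OF x_deriv])
  show "\<And>s. 0 < s \<Longrightarrow> ((\<lambda>s. x s a i) has_real_derivative x_rhs q (x s) a i) (at s)"
    by (rule w2a[OF x_deriv])
  fix s :: real assume s: "0 < s"
  have "(\<Sum>j\<in>UNIV-{i}. q a j i * x s a j) \<ge> 0"
    using s by (auto intro!: sum_nonneg mult_nonneg_nonneg qoff x_nonneg)
  moreover have "q a i i * x s a i \<ge> -Qs * x s a i"
    using qabs[of a i i] x_nonneg[of s a i] s by (intro mult_right_mono) auto
  ultimately show "x_rhs q (x s) a i \<ge> -Qs * x s a i" unfolding x_rhs_split by linarith
qed

lemma x_pos: "0 \<le> t \<Longrightarrow> 0 < x t a i"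
  using x_lower_decay[of 0 t a i] x0[of a i]
  by (smt (verit) exp_gt_zero mult_pos_pos)

definition "N a = (\<Sum>i\<in>UNIV. x 0 a i)"

lemma mass: "0 \<le> t \<Longrightarrow> (\<Sum>i\<in>UNIV. x t a i) = N a"
proof -
  have d: "((\<lambda>s. \<Sum>i\<in>UNIV. x s a i) has_real_derivative 0) (at s within {0..})" if "s \<in> {0..}" for s
  proof -
    have "((\<lambda>s. \<Sum>i\<in>UNIV. x s a i) has_real_derivative (\<Sum>i\<in>UNIV. x_rhs q (x s) a i)) (at s within {0..})"
      using that by (intro DERIV_sum x_deriv) auto
    moreover have "(\<Sum>i\<in>UNIV. x_rhs q (x s) a i) = 0"
    proof -
      have "(\<Sum>i\<in>UNIV. x_rhs q (x s) a i) = (\<Sum>j\<in>UNIV. \<Sum>i\<in>UNIV. q a j i * x s a j)"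
        unfolding x_rhs_def by (rule sum.swap)
      also have "\<dots> = (\<Sum>j\<in>UNIV. (\<Sum>i\<in>UNIV. q a j i) * x s a j)" by (simp add: sum_distrib_right)
      also have "\<dots> = 0" by (simp add: qrow)
      finally show ?thesis .
    qed
    ultimately show ?thesis by simp
  qed
  obtain c where "\<forall>s\<in>{0..}. (\<Sum>i\<in>UNIV. x s a i) = c"
    using has_field_derivative_zero_constant[OF convex_real_interval(1) d] by blast
  thus "0 \<le> t \<Longrightarrow> (\<Sum>i\<in>UNIV. x t a i) = N a" unfolding N_def by auto
qed

lemma x_le_N: "0 \<le> t \<Longrightarrow> x t a i \<le> N a"
  using member_le_sum[of i UNIV "\<lambda>i. x t a i"] x_nonneg mass by auto

end


context sis begin

lemma x_rhs_two: "j \<noteq> i \<Longrightarrow> 0 \<le> s \<Longrightarrow> x_rhs q (x s) a i \<ge> q a i i * x s a i + q a j i * x s a j"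
proof -
  assume h: "j \<noteq> i" "0 \<le> s"
  have "q a j i * x s a j \<le> (\<Sum>k\<in>UNIV-{i}. q a k i * x s a k)"
    by (rule member_le_sum) (use h in \<open>auto intro!: mult_nonneg_nonneg qoff x_nonneg\<close>)
  thus ?thesis unfolding x_rhs_split by linarith
qed

lemma x_decay1: "0 \<le> t \<Longrightarrow> t \<le> s \<Longrightarrow> s \<le> t + 1 \<Longrightarrow> x s a j \<ge> exp (-Qs) * x t a j"
proof -
  assume h: "0 \<le> t" "t \<le> s" "s \<le> t + 1"
  have "Qs*(s-t) \<le> Qs*1" using h Qs_nonneg by (intro mult_left_mono) auto
  hence "exp (-Qs) \<le> exp (-Qs*(s-t))" by simp
  hence "exp (-Qs) * x t a j \<le> exp (-Qs*(s-t)) * x t a j"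
    using x_nonneg[OF h(1)] by (rule mult_right_mono)
  thus ?thesis using x_lower_decay[OF h(1,2), of a j] by linarith
qed

lemma edge:
  assumes ji: "j \<noteq> i" "0 < q a j i" and t: "0 \<le> t"
  shows "x (t+1) a i \<ge> q a j i * exp (-2*Qs) * x t a j"
proof -
  define A where "A = q a j i * exp (-Qs) * x t a j"
  have A0: "A \<ge> 0" unfolding A_def using ji x_nonneg[OF t] by simp
  define g where "g s = exp (Qs* s) * x s a i - A * exp (Qs*t) * s" for s
  have "g t \<le> g (t+1)"
  proof (rule DERIV_nonneg_imp_increasing_open[of t "t+1" g])
    fix s assume s: "t < s" "s < t + 1"
    have "(g has_real_derivative (exp (Qs* s) * Qs * x s a i + exp (Qs* s) * x_rhs q (x s) a i - A * exp (Qs*t))) (at s)"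
      unfolding g_def using w2a[OF x_deriv, of s] s t by (auto intro!: derivative_eq_intros)
    moreover have "exp (Qs* s) * Qs * x s a i + exp (Qs* s) * x_rhs q (x s) a i - A * exp (Qs*t) \<ge> 0"
    proof -
      have "x_rhs q (x s) a i \<ge> q a i i * x s a i + q a j i * x s a j"
        using x_rhs_two[OF ji(1)] s t by simp
      moreover have "q a i i * x s a i \<ge> -Qs * x s a i"
        using qabs[of a i i] x_nonneg[of s a i] s t by (intro mult_right_mono) auto
      moreover have "q a j i * x s a j \<ge> A"
        unfolding A_def using x_decay1[of t s a j] s t ji by (simp add: mult.assoc mult_left_mono)
      ultimately have r: "Qs * x s a i + x_rhs q (x s) a i \<ge> A" by linarith
      have "exp (Qs* s) * (Qs * x s a i + x_rhs q (x s) a i) \<ge> exp (Qs* s) * A"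
        using r by (intro mult_left_mono) auto
      moreover have "exp (Qs* s) * A \<ge> exp (Qs*t) * A"
        using A0 s Qs_nonneg by (intro mult_right_mono) (auto intro: mult_left_mono)
      ultimately show ?thesis by (simp add: algebra_simps)
    qed
    ultimately show "\<exists>y. (g has_real_derivative y) (at s) \<and> 0 \<le> y" by blast
  next
    have "continuous_on {t..t+1} (\<lambda>s. x s a i)"
      by (rule continuous_on_subset[OF w2c[OF x_deriv]]) (use t in auto)
    thus "continuous_on {t..t+1} g" unfolding g_def by (intro continuous_intros)
  qed simp
  hence "exp (Qs*(t+1)) * x (t+1) a i \<ge> exp (Qs*t) * x t a i + A * exp (Qs*t)"
    unfolding g_def by (simp add: algebra_simps)
  moreover have "exp (Qs*t) * x t a i \<ge> 0" using x_nonneg[OF t] by simp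
  ultimately have "exp (Qs*(t+1)) * x (t+1) a i \<ge> A * exp (Qs*t)" by linarith
  hence h1: "exp (-Qs*(t+1)) * (exp (Qs*(t+1)) * x (t+1) a i) \<ge> exp (-Qs*(t+1)) * (A * exp (Qs*t))"
    by (intro mult_left_mono) auto
  have h2: "exp (-Qs*(t+1)) * (exp (Qs*(t+1)) * x (t+1) a i) = x (t+1) a i"
    by (simp add: mult.assoc[symmetric] exp_add[symmetric])
  have h3: "exp (-Qs*(t+1)) * (A * exp (Qs*t)) = q a j i * exp (-2*Qs) * x t a j"
  proof -
    have "exp (-Qs*(t+1)) * (A * exp (Qs*t)) = A * (exp (-Qs*(t+1)) * exp (Qs*t))" by simp
    also have "exp (-Qs*(t+1)) * exp (Qs*t) = exp (-Qs)" by (simp add: exp_add[symmetric] algebra_simps)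
    finally show ?thesis unfolding A_def by (simp add: mult_exp_exp algebra_simps)
  qed
  show ?thesis using h1 unfolding h2 h3 .
qed

definition "E a = {(u, v). u \<noteq> v \<and> 0 < q a u v}"

lemma path:
  assumes "(j, i) \<in> (E a)\<^sup>*"
  shows "\<exists>m0::nat. \<forall>m\<ge>m0. \<exists>c>0. \<forall>t\<ge>0. x (t + real m) a i \<ge> c * x t a j"
  using assms
proof (induction rule: rtrancl_induct)
  case base
  show ?case
  proof (intro exI[of _ "0::nat"] allI impI)
    fix m :: nat
    show "\<exists>c>0. \<forall>t\<ge>0. x (t + real m) a j \<ge> c * x t a j"
    proof -
      have "\<forall>t\<ge>0. x (t + real m) a j \<ge> exp (-Qs * real m) * x t a j"
      proof (intro allI impI)
        fix t :: real assume "0 \<le> t"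
        thus "x (t + real m) a j \<ge> exp (-Qs * real m) * x t a j"
          using x_lower_decay[of t "t + real m" a j] by simp
      qed
      moreover have "exp (-Qs * real m) > 0" by simp
      ultimately show ?thesis by blast
    qed
  qed
next
  case (step k i)
  then obtain m0 where m0: "\<And>m. m \<ge> m0 \<Longrightarrow> \<exists>c>0. \<forall>t\<ge>0. x (t + real m) a k \<ge> c * x t a j" by blast
  have ki: "k \<noteq> i" "0 < q a k i" using step(2) unfolding E_def by auto
  show ?case
  proof (intro exI[of _ "Suc m0"] allI impI)
    fix m assume m: "m \<ge> Suc m0"
    then obtain c where c: "c > 0" "\<And>t. t \<ge> 0 \<Longrightarrow> x (t + real (m-1)) a k \<ge> c * x t a j"
    proof -
      have "m - 1 \<ge> m0" using m by simp
      from m0[OF this] show ?thesis using that by blast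
    qed
    show "\<exists>c>0. \<forall>t\<ge>0. x (t + real m) a i \<ge> c * x t a j"
    proof (intro exI[of _ "q a k i * exp (-2*Qs) * c"] conjI allI impI)
      show "q a k i * exp (-2*Qs) * c > 0" using ki c by simp
      fix t :: real assume t: "t \<ge> 0"
      have eq: "t + real m = (t + real (m-1)) + 1" using m by (simp add: of_nat_diff)
      have "x (t + real m) a i \<ge> q a k i * exp (-2*Qs) * x (t + real (m-1)) a k"
        unfolding eq by (rule edge[OF ki]) (use t in simp)
      moreover have "q a k i * exp (-2*Qs) * x (t + real (m-1)) a k \<ge> q a k i * exp (-2*Qs) * (c * x t a j)"
        using c(2)[OF t] ki by (intro mult_left_mono) auto
      ultimately show "x (t + real m) a i \<ge> q a k i * exp (-2*Qs) * c * x t a j" by (simp add: mult.assoc)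
    qed
  qed
qed

end


context sis begin

lemma N_pos: "0 < N a"
  unfolding N_def using x0 by (intro sum_pos) auto

lemma x_lower: "\<exists>cx>0. \<forall>t\<ge>0. \<forall>a i. x t a i \<ge> cx"
proof -
  have "\<And>k::'c\<times>'n\<times>'n. \<exists>m0. \<forall>m\<ge>m0. \<exists>c>0. \<forall>t\<ge>0. x (t + real m) (fst k) (snd (snd k)) \<ge> c * x t (fst k) (fst (snd k))"
  proof -
    fix k :: "'c\<times>'n\<times>'n"
    obtain a j i where k: "k = (a,j,i)" by (cases k) auto
    have "\<forall>i j. (i,j) \<in> (E a)\<^sup>*" using irr[of a] unfolding irreducible_generator_def E_def .
    hence "(j,i) \<in> (E a)\<^sup>*" by blast
    from path[OF this] show "?thesis k" unfolding k by simp
  qed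
  hence "\<exists>M. \<forall>k::'c\<times>'n\<times>'n. \<exists>c>0. \<forall>t\<ge>0. x (t + real M) (fst k) (snd (snd k)) \<ge> c * x t (fst k) (fst (snd k))"
    by (rule finite_uniform_nat)
  then obtain M where
    M: "\<forall>k::'c\<times>'n\<times>'n. \<exists>c>0. \<forall>t\<ge>0. x (t + real M) (fst k) (snd (snd k)) \<ge> c * x t (fst k) (fst (snd k))"
    by (rule exE)
  have "\<exists>c>0. \<forall>k::'c\<times>'n\<times>'n. \<forall>t\<ge>0. x (t + real M) (fst k) (snd (snd k)) \<ge> c * x t (fst k) (fst (snd k))"
  proof (rule finite_uniform_pos)
    show "\<And>k. \<exists>c>0. \<forall>t\<ge>0. x (t + real M) (fst k) (snd (snd k)) \<ge> c * x t (fst k) (fst (snd k))" using M by (rule spec)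
  next
    fix k :: "'c\<times>'n\<times>'n" and c c' :: real
    assume h: "\<forall>t\<ge>0. x (t + real M) (fst k) (snd (snd k)) \<ge> c * x t (fst k) (fst (snd k))" "0 < c'" "c' \<le> c"
    show "\<forall>t\<ge>0. x (t + real M) (fst k) (snd (snd k)) \<ge> c' * x t (fst k) (fst (snd k))"
    proof (intro allI impI)
      fix t :: real assume t: "0 \<le> t"
      have "c' * x t (fst k) (fst (snd k)) \<le> c * x t (fst k) (fst (snd k))"
        using h(3) x_nonneg[OF t] by (intro mult_right_mono) auto
      moreover have "x (t + real M) (fst k) (snd (snd k)) \<ge> c * x t (fst k) (fst (snd k))" using h(1) t by blast
      ultimately show "x (t + real M) (fst k) (snd (snd k)) \<ge> c' * x t (fst k) (fst (snd k))" by linarith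
    qed
  qed
  then obtain c where c0: "c > 0" and H: "\<forall>k::'c\<times>'n\<times>'n. \<forall>t\<ge>0. x (t + real M) (fst k) (snd (snd k)) \<ge> c * x t (fst k) (fst (snd k))"
    by (elim exE conjE)
  have c: "c > 0" "\<And>a j i t. t \<ge> 0 \<Longrightarrow> x (t + real M) a i \<ge> c * x t a j"
    using c0 apply blast
    subgoal for a j i t using spec[OF H, of "(a,j,i)"] by simp
    done
  have bk: "\<exists>b>0. \<forall>t\<ge>0. x t (fst k) (snd k) \<ge> b" for k :: "'c\<times>'n"
  proof -
    obtain a i where k: "k = (a,i)" by force
    define b where "b = min (c * N a / CARD('n)) (exp (-Qs * M) * x 0 a i)"
    have bpos: "b > 0" unfolding b_def using c N_pos x0 by simp
    have "x t a i \<ge> b" if t: "t \<ge> 0" for t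
    proof (cases "t \<ge> M")
      case True
      have "CARD('n) * x t a i = (\<Sum>j::'n\<in>UNIV. x t a i)" by simp
      also have "\<dots> \<ge> (\<Sum>j\<in>UNIV. c * x (t - M) a j)"
        using c(2)[of "t - M" a _ i] True by (intro sum_mono) auto
      also have "(\<Sum>j\<in>UNIV. c * x (t - M) a j) = c * N a"
        using mass[of "t - M" a] True by (simp add: sum_distrib_left[symmetric])
      finally have "x t a i \<ge> c * N a / CARD('n)" by (simp add: field_simps)
      thus ?thesis unfolding b_def by simp
    next
      case False
      have "exp (-Qs * M) \<le> exp (-Qs * t)" using False Qs_nonneg by (simp add: mult_left_mono)
      hence "exp (-Qs * M) * x 0 a i \<le> exp (-Qs * t) * x 0 a i" using x0[of a i] by simp
      also have "\<dots> \<le> x t a i" using x_lower_decay[of 0 t a i] t by simp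
      finally show ?thesis unfolding b_def by simp
    qed
    thus ?thesis using bpos k by auto
  qed
  have "\<exists>cx>0. \<forall>k::'c\<times>'n. \<forall>t\<ge>0. x t (fst k) (snd k) \<ge> cx"
    by (rule finite_uniform_pos[of "\<lambda>k b. \<forall>t\<ge>0. x t (fst k) (snd k) \<ge> b", OF bk]) auto
  then obtain cx where "cx > 0" "\<forall>k::'c\<times>'n. \<forall>t\<ge>0. x t (fst k) (snd k) \<ge> cx" by blast
  moreover have "\<forall>t\<ge>0. \<forall>a i. x t a i \<ge> cx"
  proof (intro allI impI)
    fix t a i assume "0 \<le> (t::real)"
    thus "x t a i \<ge> cx" using spec[OF calculation(2), of "(a,i)"] by simp
  qed
  ultimately show ?thesis by blast
qed

end



lemma p_rhs_alt: "p_rhs q \<beta> \<delta> X P a i = -\<delta> i * P a i + \<beta> i * pbar X P i * (1 - P a i)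
   + (\<Sum>j\<in>UNIV-{i}. q a j i * X a j / X a i * (P a j - P a i))"
proof -
  have L1: "Lmat q X a i i * P a i = (\<Sum>j\<in>UNIV-{i}. q a j i * X a j / X a i * P a i)"
    unfolding Lmat_def by (simp add: sum_divide_distrib sum_distrib_right)
  have L2: "(\<Sum>j\<in>UNIV-{i}. Lmat q X a i j * P a j) = - (\<Sum>j\<in>UNIV-{i}. q a j i * X a j / X a i * P a j)"
    unfolding Lmat_def sum_negf[symmetric] by (rule sum.cong) auto
  have S: "(\<Sum>j\<in>UNIV-{i}. q a j i * X a j / X a i * (P a j - P a i))
     = (\<Sum>j\<in>UNIV-{i}. q a j i * X a j / X a i * P a j) - (\<Sum>j\<in>UNIV-{i}. q a j i * X a j / X a i * P a i)"
    by (simp add: right_diff_distrib sum_subtractf)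
  show ?thesis unfolding p_rhs_def L1 L2 S by simp
qed

context sis begin

definition "cx = (SOME c. c > 0 \<and> (\<forall>t\<ge>0. \<forall>a i. x t a i \<ge> c))"

lemma cx: "cx > 0" "0 \<le> t \<Longrightarrow> x t a i \<ge> cx"
proof -
  have "cx > 0 \<and> (\<forall>t\<ge>0. \<forall>a i. x t a i \<ge> cx)"
    unfolding cx_def using x_lower by (rule someI_ex)
  thus "cx > 0" "0 \<le> t \<Longrightarrow> x t a i \<ge> cx" by auto
qed

definition "Nt = (\<Sum>a\<in>UNIV. N a)"

lemma xsum_le: "0 \<le> t \<Longrightarrow> (\<Sum>g\<in>UNIV. x t g i) \<le> Nt"
  unfolding Nt_def by (intro sum_mono x_le_N)

lemma x_le_Nt: "0 \<le> t \<Longrightarrow> x t a i \<le> Nt"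
proof -
  assume t: "0 \<le> t"
  have "x t a i \<le> (\<Sum>g\<in>UNIV. x t g i)"
    by (rule member_le_sum) (use t x_nonneg in auto)
  thus ?thesis using xsum_le[OF t, of i] by linarith
qed

lemma Nt_pos: "0 < Nt"
proof -
  have "x 0 undefined undefined \<le> Nt" by (rule x_le_Nt) simp
  moreover have "0 < x 0 undefined undefined" by (rule x0)
  ultimately show ?thesis by linarith
qed

lemma xsum_pos: "0 \<le> t \<Longrightarrow> 0 < (\<Sum>g\<in>UNIV. x t g i)"
  using x_pos by (intro sum_pos) auto

lemma frac_nonneg: "0 \<le> t \<Longrightarrow> 0 \<le> frac (x t) g i"
  unfolding frac_def using x_nonneg xsum_pos by (simp add: less_imp_le)

lemma frac_sum: "0 \<le> t \<Longrightarrow> (\<Sum>g\<in>UNIV. frac (x t) g i) = 1"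
  unfolding frac_def using xsum_pos[of t i] by (simp add: sum_divide_distrib[symmetric])

lemma frac_ge: "0 \<le> t \<Longrightarrow> frac (x t) g i \<ge> cx / Nt"
proof -
  assume t: "0 \<le> t"
  have "cx / Nt \<le> x t g i / Nt" using cx(2)[OF t] Nt_pos by (simp add: divide_right_mono)
  also have "\<dots> \<le> x t g i / (\<Sum>g\<in>UNIV. x t g i)"
    using xsum_le[OF t] xsum_pos[OF t, of i] x_nonneg[OF t] Nt_pos by (intro divide_left_mono) auto
  finally show ?thesis unfolding frac_def .
qed

definition "Bs = (\<Sum>i\<in>UNIV. \<beta> i)"

lemma beta_le: "\<beta> i \<le> Bs"
  unfolding Bs_def by (rule member_le_sum) (auto intro: less_imp_le beta_pos)

lemma coef_nonneg: "0 \<le> t \<Longrightarrow> j \<noteq> i \<Longrightarrow> 0 \<le> q a j i * x t a j / x t a i"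
  using qoff x_nonneg by (simp add: divide_nonneg_nonneg)

lemma p_nonneg: "0 \<le> t \<Longrightarrow> 0 \<le> p t a i"
proof -
  assume t: "0 \<le> t"
  let ?u = "\<lambda>t (k::'c\<times>'n). p t (fst k) (snd k)"
  let ?u' = "\<lambda>t (k::'c\<times>'n). p_rhs q \<beta> \<delta> (x t) (p t) (fst k) (snd k)"
  have "0 \<le> ?u t (a,i)"
  proof (rule nonneg_inv[where u = ?u and u' = ?u' and t = t and k = "(a,i)" and K = "2 * Bs"])
    show "\<And>t k. 0 \<le> t \<Longrightarrow> ((\<lambda>s. ?u s k) has_real_derivative ?u' t k) (at t within {0..})"
      using p_deriv by auto
    show "\<And>k. 0 \<le> ?u 0 k" using p0 by simp
    show "0 \<le> 2 * Bs" using beta_le[of undefined] beta_pos[of undefined] by simp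
    show "0 \<le> t" by fact
  next
    fix t k assume h: "0 < t" "-1 \<le> ?u t k" "?u t k \<le> 0" "\<forall>j. ?u t k \<le> ?u t j"
    obtain b l where k: "k = (b,l)" by force
    have le: "p t b l \<le> p t g j" for g j using h(4)[rule_format, of "(g,j)"] k by simp
    have pl: "-1 \<le> p t b l" "p t b l \<le> 0" using h(2,3) k by auto
    have t0: "0 \<le> t" using h(1) by simp
    have s1: "-\<delta> l * p t b l \<ge> 0" using delta_nonneg[of l] pl by (simp add: mult_nonneg_nonpos)
    have s2: "(\<Sum>j\<in>UNIV-{l}. q b j l * x t b j / x t b l * (p t b j - p t b l)) \<ge> 0"
      using coef_nonneg[OF t0] le by (intro sum_nonneg mult_nonneg_nonneg) auto
    have pb: "pbar (x t) (p t) l \<ge> p t b l"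
    proof -
      have "(\<Sum>g\<in>UNIV. frac (x t) g l * p t b l) \<le> (\<Sum>g\<in>UNIV. frac (x t) g l * p t g l)"
        using frac_nonneg[OF t0] le by (intro sum_mono mult_left_mono) auto
      thus ?thesis unfolding pbar_def using frac_sum[OF t0, of l] by (simp add: sum_distrib_right[symmetric])
    qed
    have s3: "\<beta> l * pbar (x t) (p t) l * (1 - p t b l) \<ge> \<beta> l * p t b l * (1 - p t b l)"
      using pb pl beta_pos[of l] by (intro mult_right_mono mult_left_mono) auto
    have s4: "\<beta> l * p t b l * (1 - p t b l) \<ge> 2 * \<beta> l * p t b l"
    proof -
      have e: "p t b l * (1 - p t b l) - 2 * p t b l = (- p t b l) * (1 + p t b l)" by (simp add: algebra_simps)
      have "(- p t b l) * (1 + p t b l) \<ge> 0" using pl by (intro mult_nonneg_nonneg) auto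
      hence "p t b l * (1 - p t b l) \<ge> 2 * p t b l" using e by linarith
      hence "\<beta> l * (p t b l * (1 - p t b l)) \<ge> \<beta> l * (2 * p t b l)"
        using beta_pos[of l] by (intro mult_left_mono) auto
      thus ?thesis by (simp add: mult.assoc mult.left_commute)
    qed
    have s5: "2 * \<beta> l * p t b l \<ge> 2 * Bs * p t b l"
      using beta_le[of l] pl by (simp add: mult_right_mono_neg)
    have "p_rhs q \<beta> \<delta> (x t) (p t) b l \<ge> 2 * Bs * p t b l"
      unfolding p_rhs_alt using s1 s2 s3 s4 s5 by linarith
    thus "2 * Bs * ?u t k \<le> ?u' t k" using k by simp
  qed
  thus ?thesis by simp
qed

lemma pbar_nonneg: "0 \<le> t \<Longrightarrow> 0 \<le> pbar (x t) (p t) i"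
  unfolding pbar_def using frac_nonneg p_nonneg by (intro sum_nonneg mult_nonneg_nonneg) auto

lemma p_le1: "0 \<le> t \<Longrightarrow> p t a i \<le> 1"
proof -
  assume t: "0 \<le> t"
  let ?u = "\<lambda>t (k::'c\<times>'n). 1 - p t (fst k) (snd k)"
  let ?u' = "\<lambda>t (k::'c\<times>'n). - p_rhs q \<beta> \<delta> (x t) (p t) (fst k) (snd k)"
  have "0 \<le> ?u t (a,i)"
  proof (rule nonneg_inv[where u = ?u and u' = ?u' and t = t and k = "(a,i)" and K = 0])
    show "\<And>t k. 0 \<le> t \<Longrightarrow> ((\<lambda>s. ?u s k) has_real_derivative ?u' t k) (at t within {0..})"
      using p_deriv by (auto intro!: derivative_eq_intros)
    show "\<And>k. 0 \<le> ?u 0 k" using p0 by simp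
    show "0 \<le> (0::real)" by simp
    show "0 \<le> t" by fact
  next
    fix t k assume h: "0 < t" "-1 \<le> ?u t k" "?u t k \<le> 0" "\<forall>j. ?u t k \<le> ?u t j"
    obtain b l where k: "k = (b,l)" by force
    have le: "p t g j \<le> p t b l" for g j using h(4)[rule_format, of "(g,j)"] k by simp
    have pl: "1 \<le> p t b l" using h(3) k by auto
    have t0: "0 \<le> t" using h(1) by simp
    have s1: "\<delta> l * p t b l \<ge> 0" using delta_nonneg[of l] pl by simp
    have s2: "(\<Sum>j\<in>UNIV-{l}. q b j l * x t b j / x t b l * (p t b j - p t b l)) \<le> 0"
      using coef_nonneg[OF t0] le by (intro sum_nonpos mult_nonneg_nonpos) auto
    have s3: "\<beta> l * pbar (x t) (p t) l * (1 - p t b l) \<le> 0"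
      using pbar_nonneg[OF t0, of l] pl beta_pos[of l] by (intro mult_nonneg_nonpos) auto
    have "- p_rhs q \<beta> \<delta> (x t) (p t) b l \<ge> 0"
      unfolding p_rhs_alt using s1 s2 s3 by linarith
    thus "0 * ?u t k \<le> ?u' t k" using k by simp
  qed
  thus ?thesis by simp
qed

end


context sis begin

definition "Cb = Qs * Nt / cx"
definition "Lb = CARD('n) * Cb"
definition "Ds = (\<Sum>i\<in>UNIV. \<delta> i)"
definition "Mp = Ds + Lb"

lemma Cb_nonneg: "0 \<le> Cb" unfolding Cb_def using Qs_nonneg Nt_pos cx by simp
lemma Mp_nonneg: "0 \<le> Mp"
  unfolding Mp_def Lb_def Ds_def using Cb_nonneg delta_nonneg by (simp add: sum_nonneg)
lemma delta_le: "\<delta> i \<le> Ds"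
  unfolding Ds_def by (rule member_le_sum) (auto intro: delta_nonneg)

lemma coef_le: "0 \<le> t \<Longrightarrow> j \<noteq> i \<Longrightarrow> q a j i * x t a j / x t a i \<le> Cb"
proof -
  assume t: "0 \<le> t" and ji: "j \<noteq> i"
  have "q a j i * x t a j \<le> Qs * Nt"
    using qabs[of a j i] qoff[OF ji, of a] x_le_Nt[OF t] x_nonneg[OF t] Qs_nonneg
    by (intro mult_mono) auto
  hence "q a j i * x t a j / x t a i \<le> Qs * Nt / x t a i"
    using x_pos[OF t, of a i] by (intro divide_right_mono) auto
  also have "\<dots> \<le> Qs * Nt / cx"
    using cx(1) cx(2)[OF t, of a i] x_pos[OF t] Qs_nonneg Nt_pos by (intro divide_left_mono) auto
  finally show ?thesis unfolding Cb_def .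
qed

lemma coef_ge: "0 \<le> t \<Longrightarrow> j \<noteq> i \<Longrightarrow> q a j i * x t a j / x t a i \<ge> q a j i * cx / Nt"
proof -
  assume t: "0 \<le> t" and ji: "j \<noteq> i"
  have q0: "0 \<le> q a j i" using qoff[OF ji] .
  have "q a j i * cx / Nt \<le> q a j i * x t a j / Nt"
    using cx(2)[OF t] q0 Nt_pos by (intro divide_right_mono mult_left_mono) auto
  also have "\<dots> \<le> q a j i * x t a j / x t a i"
    using x_le_Nt[OF t] x_pos[OF t] q0 x_nonneg[OF t] mult_pos_pos[OF Nt_pos x_pos[OF t, of a i]]
    by (intro divide_left_mono mult_nonneg_nonneg) auto
  finally show ?thesis .
qed

lemma sumcoef_le: "0 \<le> t \<Longrightarrow> (\<Sum>j\<in>UNIV-{i}. q a j i * x t a j / x t a i) \<le> Lb"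
proof -
  assume t: "0 \<le> t"
  have "(\<Sum>j\<in>UNIV-{i}. q a j i * x t a j / x t a i) \<le> (\<Sum>j\<in>UNIV-{i}. Cb)"
    using coef_le[OF t] by (intro sum_mono) auto
  also have "\<dots> = card (UNIV - {i}) * Cb" by simp
  also have "\<dots> \<le> CARD('n) * Cb" using Cb_nonneg by (intro mult_right_mono) (auto intro: card_mono)
  finally show ?thesis unfolding Lb_def .
qed

lemma rhs_low: "0 \<le> t \<Longrightarrow> p_rhs q \<beta> \<delta> (x t) (p t) a i \<ge> -Mp * p t a i
    + \<beta> i * pbar (x t) (p t) i * (1 - p t a i) + (\<Sum>j\<in>UNIV-{i}. q a j i * x t a j / x t a i * p t a j)"
proof -
  assume t: "0 \<le> t"
  have S: "(\<Sum>j\<in>UNIV-{i}. q a j i * x t a j / x t a i * (p t a j - p t a i))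
     = (\<Sum>j\<in>UNIV-{i}. q a j i * x t a j / x t a i * p t a j) - (\<Sum>j\<in>UNIV-{i}. q a j i * x t a j / x t a i) * p t a i"
    by (simp add: right_diff_distrib sum_subtractf sum_distrib_right)
  have A: "(\<Sum>j\<in>UNIV-{i}. q a j i * x t a j / x t a i) * p t a i \<le> Lb * p t a i"
    using sumcoef_le[OF t] p_nonneg[OF t] by (intro mult_right_mono) auto
  have B: "\<delta> i * p t a i \<le> Ds * p t a i"
    using delta_le p_nonneg[OF t] by (intro mult_right_mono) auto
  show ?thesis unfolding p_rhs_alt S Mp_def using A B by (simp add: algebra_simps)
qed

lemma rhs_terms_nonneg:
  assumes "0 \<le> t"
  shows "\<beta> i * pbar (x t) (p t) i * (1 - p t a i) \<ge> 0"
    "(\<Sum>j\<in>UNIV-{i}. q a j i * x t a j / x t a i * p t a j) \<ge> 0"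
proof -
  show "\<beta> i * pbar (x t) (p t) i * (1 - p t a i) \<ge> 0"
    using assms beta_pos[of i] pbar_nonneg[OF assms, of i] p_le1[OF assms, of a i]
    by (intro mult_nonneg_nonneg) auto
  show "(\<Sum>j\<in>UNIV-{i}. q a j i * x t a j / x t a i * p t a j) \<ge> 0"
  proof (rule sum_nonneg)
    fix k assume "k \<in> UNIV - {i}" hence "k \<noteq> i" by auto
    show "0 \<le> q a k i * x t a k / x t a i * p t a k"
      by (rule mult_nonneg_nonneg[OF coef_nonneg[OF assms \<open>k \<noteq> i\<close>] p_nonneg[OF assms]])
  qed
qed

lemma rhs_decay: "0 \<le> t \<Longrightarrow> p_rhs q \<beta> \<delta> (x t) (p t) a i \<ge> -Mp * p t a i"
  using rhs_low[of t a i] rhs_terms_nonneg[where t=t and i=i and a=a] by linarith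

lemma p_decay1: "0 \<le> t \<Longrightarrow> t \<le> s \<Longrightarrow> s \<le> t + 1 \<Longrightarrow> p s a i \<ge> exp (-Mp) * p t a i"
proof -
  assume h: "0 \<le> t" "t \<le> s" "s \<le> t + 1"
  have d: "p s a i \<ge> exp (-Mp*(s-t)) * p t a i"
  proof (rule decay[where f' = "\<lambda>s. p_rhs q \<beta> \<delta> (x s) (p s) a i"])
    show "continuous_on {0..} (\<lambda>s. p s a i)" by (rule w2c[OF p_deriv])
    show "\<And>s. 0 < s \<Longrightarrow> ((\<lambda>s. p s a i) has_real_derivative p_rhs q \<beta> \<delta> (x s) (p s) a i) (at s)"
      by (rule w2a[OF p_deriv])
    show "\<And>s. 0 < s \<Longrightarrow> p_rhs q \<beta> \<delta> (x s) (p s) a i \<ge> -Mp * p s a i" by (rule rhs_decay) simp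
  qed (use h in auto)
  have "Mp*(s-t) \<le> Mp*1" using h Mp_nonneg by (intro mult_left_mono) auto
  hence "exp (-Mp) \<le> exp (-Mp*(s-t))" by simp
  hence "exp (-Mp) * p t a i \<le> exp (-Mp*(s-t)) * p t a i"
    using p_nonneg[OF h(1)] by (rule mult_right_mono)
  thus ?thesis using d by linarith
qed

lemma prop_class:
  assumes lim: "((\<lambda>t. p t a i) \<longlongrightarrow> 0) at_top"
  shows "((\<lambda>t. p t g i) \<longlongrightarrow> 0) at_top"
proof -
  obtain T1 where T1: "\<And>t. T1 \<le> t \<Longrightarrow> p t a i < 1/2"
    using order_tendstoD(2)[OF lim, of "1/2"] by (auto simp: eventually_at_top_linorder)
  define T where "T = max T1 0"
  show ?thesis
  proof (rule propagate[where y = "\<lambda>t. p t a i" and y' = "\<lambda>t. p_rhs q \<beta> \<delta> (x t) (p t) a i"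
        and T = T and K = Mp and c = "\<beta> i * (cx / Nt) / 2" and d = "exp (-Mp)"])
    show "\<And>t. 0 < t \<Longrightarrow> ((\<lambda>t. p t a i) has_real_derivative p_rhs q \<beta> \<delta> (x t) (p t) a i) (at t)"
      by (rule w2a[OF p_deriv])
    show "((\<lambda>t. p t a i) \<longlongrightarrow> 0) at_top" by (rule lim)
    show "\<And>t. T \<le> t \<Longrightarrow> 0 \<le> p t g i" using p_nonneg unfolding T_def by simp
    show "\<And>t s. T \<le> t \<Longrightarrow> t \<le> s \<Longrightarrow> s \<le> t + 1 \<Longrightarrow> p s g i \<ge> exp (-Mp) * p t g i"
      using p_decay1 unfolding T_def by simp
    show "0 < \<beta> i * (cx / Nt) / 2" using beta_pos cx Nt_pos by simp
    show "0 < exp (-Mp)" by simp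
    show "0 \<le> Mp" by (rule Mp_nonneg)
  next
    fix t assume "T \<le> t"
    hence t: "0 \<le> t" "T1 \<le> t" unfolding T_def by auto
    have pb: "pbar (x t) (p t) i \<ge> (cx / Nt) * p t g i"
    proof -
      have "(cx / Nt) * p t g i \<le> frac (x t) g i * p t g i"
        using frac_ge[OF t(1)] p_nonneg[OF t(1)] by (intro mult_right_mono) auto
      also have "\<dots> \<le> pbar (x t) (p t) i" unfolding pbar_def
        by (rule member_le_sum) (auto intro: mult_nonneg_nonneg[OF frac_nonneg[OF t(1)] p_nonneg[OF t(1)]])
      finally show ?thesis .
    qed
    have h: "1 - p t a i \<ge> 1/2" using T1[OF t(2)] by simp
    have bp: "\<beta> i * pbar (x t) (p t) i \<ge> 0" using beta_pos[of i] pbar_nonneg[OF t(1), of i] by simp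
    have "\<beta> i * pbar (x t) (p t) i * (1 - p t a i) \<ge> \<beta> i * pbar (x t) (p t) i * (1/2)"
      using bp h by (rule mult_left_mono[rotated])
    moreover have "\<beta> i * pbar (x t) (p t) i \<ge> \<beta> i * ((cx / Nt) * p t g i)"
      using pb beta_pos[of i] by (intro mult_left_mono) auto
    moreover have "\<beta> i * ((cx / Nt) * p t g i) * (1/2) \<le> \<beta> i * pbar (x t) (p t) i * (1/2)"
      using calculation(2) by (rule mult_right_mono) simp
    ultimately have "\<beta> i * pbar (x t) (p t) i * (1 - p t a i) \<ge> \<beta> i * ((cx / Nt) * p t g i) * (1/2)"
      by linarith
    hence A: "\<beta> i * pbar (x t) (p t) i * (1 - p t a i) \<ge> \<beta> i * (cx / Nt) / 2 * p t g i" by simp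
    have "\<bar>p t a i\<bar> = p t a i" using p_nonneg[OF t(1)] by simp
    thus "p_rhs q \<beta> \<delta> (x t) (p t) a i \<ge> - Mp * \<bar>p t a i\<bar> + \<beta> i * (cx / Nt) / 2 * p t g i"
      using rhs_low[OF t(1), of a i] rhs_terms_nonneg(2)[where t=t and i=i and a=a, OF t(1)] A by linarith
  qed
qed

lemma prop_edge:
  assumes lim: "((\<lambda>t. p t a i) \<longlongrightarrow> 0) at_top" and ji: "j \<noteq> i" "0 < q a j i"
  shows "((\<lambda>t. p t a j) \<longlongrightarrow> 0) at_top"
proof (rule propagate[where y = "\<lambda>t. p t a i" and y' = "\<lambda>t. p_rhs q \<beta> \<delta> (x t) (p t) a i"
        and T = 0 and K = Mp and c = "q a j i * cx / Nt" and d = "exp (-Mp)"])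
  show "\<And>t. 0 < t \<Longrightarrow> ((\<lambda>t. p t a i) has_real_derivative p_rhs q \<beta> \<delta> (x t) (p t) a i) (at t)"
    by (rule w2a[OF p_deriv])
  show "((\<lambda>t. p t a i) \<longlongrightarrow> 0) at_top" by (rule lim)
  show "\<And>t. 0 \<le> t \<Longrightarrow> 0 \<le> p t a j" using p_nonneg by simp
  show "\<And>t s. 0 \<le> t \<Longrightarrow> t \<le> s \<Longrightarrow> s \<le> t + 1 \<Longrightarrow> p s a j \<ge> exp (-Mp) * p t a j"
    using p_decay1 by simp
  show "0 < q a j i * cx / Nt" using ji cx Nt_pos by simp
  show "0 < exp (-Mp)" by simp
  show "0 \<le> Mp" by (rule Mp_nonneg)
next
  fix t :: real assume t: "0 \<le> t"
  have "q a j i * cx / Nt * p t a j \<le> q a j i * x t a j / x t a i * p t a j"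
    using coef_ge[OF t ji(1)] p_nonneg[OF t] by (intro mult_right_mono) auto
  also have "\<dots> \<le> (\<Sum>k\<in>UNIV-{i}. q a k i * x t a k / x t a i * p t a k)"
  proof (rule member_le_sum)
    fix k assume "k \<in> UNIV - {i} - {j}" hence "k \<noteq> i" by auto
    show "0 \<le> q a k i * x t a k / x t a i * p t a k"
      by (rule mult_nonneg_nonneg[OF coef_nonneg[OF t \<open>k \<noteq> i\<close>] p_nonneg[OF t]])
  qed (use ji in auto)
  finally have A: "q a j i * cx / Nt * p t a j \<le> (\<Sum>k\<in>UNIV-{i}. q a k i * x t a k / x t a i * p t a k)" .
  have "\<bar>p t a i\<bar> = p t a i" using p_nonneg[OF t] by simp
  thus "p_rhs q \<beta> \<delta> (x t) (p t) a i \<ge> - Mp * \<bar>p t a i\<bar> + q a j i * cx / Nt * p t a j"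
    using rhs_low[OF t, of a i] rhs_terms_nonneg(1)[where t=t and i=i and a=a, OF t] A by linarith
qed

lemma all_zero:
  assumes lim: "((\<lambda>t. p t a0 i0) \<longlongrightarrow> 0) at_top"
  shows "\<forall>a i. ((\<lambda>t. p t a i) \<longlongrightarrow> 0) at_top"
proof (intro allI)
  fix a i
  have base: "((\<lambda>t. p t a i0) \<longlongrightarrow> 0) at_top" by (rule prop_class[OF lim])
  have "\<forall>u v. (u,v) \<in> (E a)\<^sup>*" using irr[of a] unfolding irreducible_generator_def E_def .
  hence "(i, i0) \<in> (E a)\<^sup>*" by blast
  thus "((\<lambda>t. p t a i) \<longlongrightarrow> 0) at_top"
  proof (induction rule: converse_rtrancl_induct)
    case base
    show ?case by (rule \<open>((\<lambda>t. p t a i0) \<longlongrightarrow> 0) at_top\<close>)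
  next
    case (step y z)
    have "y \<noteq> z" "0 < q a y z" using step(1) unfolding E_def by auto
    thus ?case using prop_edge[OF step(3)] by blast
  qed
qed

end

theorem lemma1:
  fixes q :: "'c::finite \<Rightarrow> 'n::finite \<Rightarrow> 'n \<Rightarrow> real"
    and \<beta> \<delta> :: "'n \<Rightarrow> real"
    and x p :: "real \<Rightarrow> 'c \<Rightarrow> 'n \<Rightarrow> real"
  assumes gen: "\<And>a. is_generator (q a)"
    and irr: "\<And>a. irreducible_generator (q a)"
    and beta_pos: "\<And>i. 0 < \<beta> i"
    and delta_nonneg: "\<And>i. 0 \<le> \<delta> i"
    and x_deriv: "\<And>t a i. 0 \<le> t \<Longrightarrow>
        ((\<lambda>s. x s a i) has_real_derivative x_rhs q (x t) a i) (at t within {0..})"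
    and p_deriv: "\<And>t a i. 0 \<le> t \<Longrightarrow>
        ((\<lambda>s. p s a i) has_real_derivative p_rhs q \<beta> \<delta> (x t) (p t) a i) (at t within {0..})"
    and x0: "\<And>a i. 0 < x 0 a i"
    and p0: "\<And>a i. 0 \<le> p 0 a i \<and> p 0 a i \<le> 1"
    and lim: "((\<lambda>t. p t a0 i0) \<longlongrightarrow> 0) at_top"
  shows "\<forall>a i. ((\<lambda>t. p t a i) \<longlongrightarrow> 0) at_top"
  proof -
  interpret sis q \<beta> \<delta> x p
    by unfold_locales (fact gen irr beta_pos delta_nonneg x_deriv p_deriv x0 p0)+
  show ?thesis by (rule all_zero[OF lim])
qed

end
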